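(* Suppose $\mathcal U$ is regular enough that each functional $\phi^q_k:=\delta_{y_k}\circ L_q$ ($q=1,\dots,Q$, $k=1,\dots,K$) belongs to the dual $\mathcal U^\star$. Consider the problem $$\min_{v^1,\dots,v^M\in\mathcal U,\ G\in\mathcal P}\ \|G\|_{\mathcal P}^2+\lambda\sum_{m=1}^M\|v^m\|_{\mathcal U}^2\quad\text{s.t.}\quad v^m(Y^m)=u^m(Y^m),\ \ (G+\overline P)(\Phi(v^m,y_k))=f^m(y_k)\ \ \forall m,\ \forall k.$$ Then every minimizer $(\widehat u^1,\dots,\widehat u^M,\widehat P)$ can be written as $$\widehat u^m(y)=\mathsf U(\phi,y)^T\widehat\alpha^m,\qquad \widehat P(s)=\mathsf P(S(\widehat{\boldsymbol\alpha}),s)^T\widehat\beta,$$ where $(\widehat{\boldsymbol\alpha},\widehat\beta)$, $\widehat{\boldsymbol\alpha}=(\widehat\alpha^1,\dots,\widehat\alpha^M)\in(\mathbb R^{QK})^M$, $\widehat\beta\in\mathbb R^{MK}$, solves $$\min_{\boldsymbol\alpha\in(\mathbb R^{QK})^M,\ \beta\in\mathbb R^{MK}}\ \beta^T\mathsf P(S(\boldsymbol\alpha),S(\boldsymbol\alpha))\beta+\lambda\sum_{m=1}^M(\alpha^m)^T\mathsf U(\phi,\phi)\alpha^m$$ subject to $\mathsf U(\phi,Y^m)^T\alpha^m=u^m(Y^m)$ and $\mathsf P(S(\boldsymbol\alpha),S^m(\alpha^m))^T\beta=f^m(Y)-\overline P(S^m(\alpha^m))$ for $m=1,\dots,M$.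
   Context: Setting: $\mathcal Y\subset\mathbb R^d$; known linear differential operators $L_1=\mathrm{Id},L_2,\dots,L_Q$; $\mathcal S=\mathbb R^{Q+d}$; $\Phi(v,y)=(y,L_1v(y),\dots,L_Qv(y))\in\mathcal S$. $\mathsf U:\mathcal Y\times\mathcal Y\to\mathbb R$ and $\mathsf P:\mathcal S\times\mathcal S\to\mathbb R$ are positive definite symmetric kernels with RKHSs $\mathcal U$, $\mathcal P$; $\overline P:\mathcal S\to\mathbb R$ is known; $\lambda>0$. Training data: for $m=1,\dots,M$, observation sets $Y^m=\{y^m_1,\dots,y^m_N\}$ with values $u^m(Y^m)\in\mathbb R^N$, and functions $f^m$. Collocation points $Y=\{y_1,\dots,y_K\}\subset\mathcal Y$ with $\bigcup_mY^m\subset Y$; $f^m(Y)=(f^m(y_1),\dots,f^m(y_K))$. Notation: $\mathsf U(\phi^q_k,y):=\phi^q_k(\mathsf U(\cdot,y))$ (apply $L_q$ in the first argument and evaluate at $y_k$); $\mathsf U(\phi^q_k,\phi^\ell_j):=\phi^\ell_j(\mathsf U(\phi^q_k,\cdot))$. $\mathsf U(\phi,y)\in\mathbb R^{QK}$ is the vector $(\mathsf U(\phi^1_1,y),\dots,\mathsf U(\phi^1_K,y),\dots,\mathsf U(\phi^Q_1,y),\dots,\mathsf U(\phi^Q_K,y))$; $\mathsf U(\phi,\phi)\in\mathbb R^{QK\times QK}$ is the block matrix with $(q,\ell)$ block $(\mathsf U(\phi^q_k,\phi^\ell_j))_{k,j=1}^K$; $\mathsf U(\phi,Y^m)\in\mathbb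 R^{QK\times N}$ has columns $\mathsf U(\phi,y^m_n)$. For $\alpha^m\in\mathbb R^{QK}$, $S^m(\alpha^m)=(\Phi(\mathsf U(\phi,\cdot)^T\alpha^m,y_k))_{k=1}^K$ ($K$ points of $\mathcal S$), $S(\boldsymbol\alpha)=\bigcup_{m=1}^MS^m(\alpha^m)$ ($MK$ points); for point lists $A,A'$, $\mathsf P(A,A')$ is the matrix $(\mathsf P(a,a'))_{a\in A,a'\in A'}$ and $\mathsf P(A,s)$ the vector $(\mathsf P(a,s))_{a\in A}$; $\overline P(S^m(\alpha^m))\in\mathbb R^K$ is the vector of values of $\overline P$ on $S^m(\alpha^m)$. When kernel matrices are singular, coefficient vectors are understood in the least-squares sense. *)

theory Defs
  imports "HOL-Analysis.Analysis"
begin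

text \<open>A reproducing kernel Hilbert space, presented concretely: a real Hilbert space
  of type 'h whose elements are functions on 'x via the (injective) evaluation map ev,
  containing the kernel sections k(.,y), with the reproducing property.\<close>
definition rkhs :: "('h::{real_inner,complete_space} \<Rightarrow> 'x \<Rightarrow> real) \<Rightarrow> ('x \<Rightarrow> 'x \<Rightarrow> real) \<Rightarrow> bool" where
  "rkhs ev k \<longleftrightarrow> inj ev \<and>
     (\<forall>y. \<exists>ky. ev ky = (\<lambda>x. k x y) \<and> (\<forall>v. inner ky v = ev v y))"

definition PhiF :: "(nat \<Rightarrow> ('y \<Rightarrow> real) \<Rightarrow> ('y \<Rightarrow> real)) \<Rightarrow> nat \<Rightarrow> ('y \<Rightarrow> real) \<Rightarrow> 'y \<Rightarrow> 'y \<times> real list" where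
  "PhiF L Q w y = (y, map (\<lambda>q. L q w y) [1..<Q+1])"

text \<open>U(phi^q_k, y): apply L_q to U(.,y) in the first argument and evaluate at y_k.\<close>
definition Uphi_y :: "(nat \<Rightarrow> ('y \<Rightarrow> real) \<Rightarrow> ('y \<Rightarrow> real)) \<Rightarrow> ('y \<Rightarrow> 'y \<Rightarrow> real) \<Rightarrow> (nat \<Rightarrow> 'y) \<Rightarrow> nat \<Rightarrow> nat \<Rightarrow> 'y \<Rightarrow> real" where
  "Uphi_y L U Y q k y = L q (\<lambda>x. U x y) (Y k)"

text \<open>U(phi^q_k, phi^l_j) = phi^l_j(U(phi^q_k, .)).\<close>
definition Uphiphi :: "(nat \<Rightarrow> ('y \<Rightarrow> real) \<Rightarrow> ('y \<Rightarrow> real)) \<Rightarrow> ('y \<Rightarrow> 'y \<Rightarrow> real) \<Rightarrow> (nat \<Rightarrow> 'y) \<Rightarrow> nat \<Rightarrow> nat \<Rightarrow> nat \<Rightarrow> nat \<Rightarrow> real" where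
  "Uphiphi L U Y q k l j = L l (\<lambda>y. Uphi_y L U Y q k y) (Y j)"

definition Ucomb :: "(nat \<Rightarrow> ('y \<Rightarrow> real) \<Rightarrow> ('y \<Rightarrow> real)) \<Rightarrow> ('y \<Rightarrow> 'y \<Rightarrow> real) \<Rightarrow> (nat \<Rightarrow> 'y) \<Rightarrow> nat \<Rightarrow> nat \<Rightarrow> (nat \<Rightarrow> nat \<Rightarrow> real) \<Rightarrow> 'y \<Rightarrow> real" where
  "Ucomb L U Y Q K a y = (\<Sum>q\<in>{1..Q}. \<Sum>k\<in>{1..K}. Uphi_y L U Y q k y * a q k)"

definition Spt :: "(nat \<Rightarrow> ('y \<Rightarrow> real) \<Rightarrow> ('y \<Rightarrow> real)) \<Rightarrow> ('y \<Rightarrow> 'y \<Rightarrow> real) \<Rightarrow> (nat \<Rightarrow> 'y) \<Rightarrow> nat \<Rightarrow> nat \<Rightarrow> (nat \<Rightarrow> nat \<Rightarrow> real) \<Rightarrow> nat \<Rightarrow> 'y \<times> real list" where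
  "Spt L U Y Q K a k = PhiF L Q (Ucomb L U Y Q K a) (Y k)"

end

theory Submission
  imports Defs
begin
lemma mid_identity:
  fixes a b :: "'a::real_inner" and phi :: "'a \<Rightarrow> real"
  assumes bl: "bounded_linear phi"
  shows "(norm (a - b))\<^sup>2 = 2 * ((norm a)\<^sup>2 - 2 * phi a) + 2 * ((norm b)\<^sup>2 - 2 * phi b)
          - 4 * ((norm ((1/2) *\<^sub>R (a + b)))\<^sup>2 - 2 * phi ((1/2) *\<^sub>R (a + b)))"
proof -
  interpret l: bounded_linear phi by fact
  have "phi ((1/2) *\<^sub>R (a + b)) = (1/2) * (phi a + phi b)" by (simp add: l.scaleR l.add)
  moreover have "(norm (a - b))\<^sup>2 = 2 * (norm a)\<^sup>2 + 2 * (norm b)\<^sup>2 - 4 * (norm ((1/2) *\<^sub>R (a + b)))\<^sup>2"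
    by (simp add: power2_norm_eq_inner inner_diff_left inner_diff_right inner_add_left inner_add_right inner_commute algebra_simps)
  ultimately show ?thesis by (simp add: algebra_simps)
qed

lemma var_identity:
  fixes z h :: "'a::real_inner" and phi :: "'a \<Rightarrow> real" and t :: real
  assumes bl: "bounded_linear phi"
  shows "((norm (z + t *\<^sub>R h))\<^sup>2 - 2 * phi (z + t *\<^sub>R h)) - ((norm z)\<^sup>2 - 2 * phi z)
         = 2 * t * (inner z h - phi h) + t\<^sup>2 * (norm h)\<^sup>2"
proof -
  interpret l: bounded_linear phi by fact
  have "(norm (z + t *\<^sub>R h))\<^sup>2 = (norm z)\<^sup>2 + 2 * t * inner z h + t\<^sup>2 * (norm h)\<^sup>2"
    unfolding power2_norm_eq_inner by (simp add: inner_add_left inner_add_right inner_commute algebra_simps power2_eq_square)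
  then show ?thesis
    by (simp add: l.scaleR l.add algebra_simps)
qed

lemma riesz_rep:
  fixes phi :: "'a::{real_inner,complete_space} \<Rightarrow> real"
  assumes bl: "bounded_linear phi"
  shows "\<exists>r. \<forall>v. inner r v = phi v"
proof -
  interpret l: bounded_linear phi by fact
  obtain C where C0: "C > 0" and C: "\<And>x. norm (phi x) \<le> norm x * C"
    using l.pos_bounded by blast
  define J where "J v = (norm v)\<^sup>2 - 2 * phi v" for v
  have Jlb: "- (C\<^sup>2) \<le> J v" for v
  proof -
    have "phi v \<le> norm v * C" using C[of v] by simp
    moreover have "0 \<le> (norm v - C)\<^sup>2" by simp
    ultimately show ?thesis unfolding J_def by (simp add: power2_diff algebra_simps)
  qed
  define d where "d = Inf (range J)"
  have bdd: "bdd_below (range J)" using Jlb unfolding bdd_below_def by blast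
  have dle: "d \<le> J v" for v unfolding d_def using bdd by (simp add: cInf_lower)
  have "\<exists>v. J v < d + inverse (real (Suc n))" for n
  proof -
    have "d < d + inverse (real (Suc n))" by simp
    then have "Inf (range J) < d + inverse (real (Suc n))" unfolding d_def .
    then show ?thesis using cInf_less_iff[OF _ bdd] by blast
  qed
  then obtain x where x: "\<And>n. J (x n) < d + inverse (real (Suc n))" by metis
  have key: "(norm (x m - x n))\<^sup>2 \<le> 2 * inverse (real (Suc m)) + 2 * inverse (real (Suc n))" for m n
  proof -
    have "(norm (x m - x n))\<^sup>2 = 2 * J (x m) + 2 * J (x n) - 4 * J ((1/2) *\<^sub>R (x m + x n))"
      unfolding J_def by (rule mid_identity[OF bl])
    with x[of m] x[of n] dle[of "(1/2) *\<^sub>R (x m + x n)"] show ?thesis by linarith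
  qed
  have "Cauchy x"
  proof (rule metric_CauchyI)
    fix e :: real assume e: "0 < e"
    obtain N :: nat where N: "4 / e\<^sup>2 < real N" using reals_Archimedean2 by blast
    have "4 / (real N + 1) < e\<^sup>2"
    proof -
      have "4 < e\<^sup>2 * real N" using N e by (simp add: field_simps)
      also have "\<dots> \<le> e\<^sup>2 * (real N + 1)" using e by simp
      finally show ?thesis by (simp add: field_simps)
    qed
    show "\<exists>M. \<forall>m\<ge>M. \<forall>n\<ge>M. dist (x m) (x n) < e"
    proof (intro exI allI impI)
      fix m n assume m: "N \<le> m" and n: "N \<le> n"
      have im: "inverse (real (Suc m)) \<le> inverse (real N + 1)" using m by (simp add: field_simps)
      have inn: "inverse (real (Suc n)) \<le> inverse (real N + 1)" using n by (simp add: field_simps)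
      have "(dist (x m) (x n))\<^sup>2 \<le> 4 / (real N + 1)"
        using key[of m n] im inn unfolding dist_norm divide_inverse by linarith
      also have "\<dots> < e\<^sup>2" by fact
      finally show "dist (x m) (x n) < e" using e by (smt (verit) power_mono zero_le_dist)
    qed
  qed
  then obtain z where z: "x \<longlonglongrightarrow> z" using Cauchy_convergent convergent_def by blast
  have Jt: "(\<lambda>n. J (x n)) \<longlonglongrightarrow> J z"
    unfolding J_def by (intro tendsto_intros l.tendsto z)
  have "J z \<le> d"
  proof (rule LIMSEQ_le[OF Jt])
    show "(\<lambda>n. d + inverse (real (Suc n))) \<longlonglongrightarrow> d"
      using tendsto_add[OF tendsto_const LIMSEQ_inverse_real_of_nat, of d] by simp
    show "\<exists>N. \<forall>n\<ge>N. J (x n) \<le> d + inverse (real (Suc n))" using x less_imp_le by blast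
  qed
  then have zmin: "J z \<le> J v" for v using dle[of v] by linarith
  have "inner z h = phi h" for h
  proof -
    define a where "a = inner z h - phi h"
    define b where "b = (norm h)\<^sup>2"
    define t where "t = - a / (b + 1)"
    have b0: "0 \<le> b" unfolding b_def by simp
    have "0 \<le> J (z + t *\<^sub>R h) - J z" using zmin by simp
    also have "\<dots> = 2 * t * a + t\<^sup>2 * b" unfolding J_def a_def b_def by (rule var_identity[OF bl])
    finally have nn: "0 \<le> 2 * t * a + t\<^sup>2 * b" .
    have bp: "b + 1 \<noteq> 0" using b0 by linarith
    have ts: "t * (b + 1) = - a" unfolding t_def using bp by simp
    have "(b+1)\<^sup>2 * (2 * t * a + t\<^sup>2 * b) = 2 * (t * (b + 1)) * a * (b + 1) + (t * (b + 1))\<^sup>2 * b"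
      by (simp add: algebra_simps power2_eq_square)
    also have "\<dots> = a\<^sup>2 * (- b - 2)" unfolding ts by (simp add: algebra_simps power2_eq_square)
    finally have eq: "(b+1)\<^sup>2 * (2 * t * a + t\<^sup>2 * b) = a\<^sup>2 * (- b - 2)" .
    have "0 \<le> (b+1)\<^sup>2 * (2 * t * a + t\<^sup>2 * b)" using nn by simp
    then have h1: "a\<^sup>2 * (b + 2) \<le> 0" unfolding eq by (simp add: algebra_simps)
    have h2: "0 \<le> a\<^sup>2 * (b + 2)" using b0 by simp
    have "a\<^sup>2 * (b + 2) = 0" using h1 h2 by linarith
    then have "a\<^sup>2 = 0" using b0 by simp
    then have "a = 0" by simp
    then show ?thesis unfolding a_def by simp
  qed
  then show ?thesis by blast
qed

lemma orth_span:
  fixes B :: "'a::real_inner set"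
  assumes "\<forall>b\<in>B. inner b x = 0" and "y \<in> span B"
  shows "inner y x = 0"
  using assms(2)
proof (induction rule: span_induct_alt)
  case base then show ?case by simp
next
  case (step c z y) then show ?case using assms(1) by (simp add: inner_add_left)
qed

lemma proj_exists:
  fixes B :: "'a::real_inner set"
  assumes "finite B"
  shows "\<exists>p\<in>span B. \<forall>b\<in>B. inner b (v - p) = 0"
  using assms
proof (induction B arbitrary: v rule: finite_induct)
  case empty then show ?case by (auto simp: span_zero)
next
  case (insert w B)
  obtain q where q: "q \<in> span B" "\<forall>b\<in>B. inner b (w - q) = 0" using insert.IH by blast
  obtain p where p: "p \<in> span B" "\<forall>b\<in>B. inner b (v - p) = 0" using insert.IH by blast
  define r where "r = w - q"
  have rB: "\<forall>b\<in>B. inner b r = 0" using q r_def by simp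
  have qp: "inner q (v - p) = 0" using orth_span[OF p(2) q(1)] .
  have qr: "inner q r = 0" using orth_span[OF rB q(1)] .
  have spB: "span B \<subseteq> span (insert w B)" by (rule span_mono) auto
  have rsp: "r \<in> span (insert w B)" unfolding r_def
    by (rule span_diff) (use q(1) spB in \<open>auto intro: span_base\<close>)
  show ?case
  proof (cases "r = 0")
    case True
    then have "w = q" unfolding r_def by simp
    then show ?thesis using p qp spB by auto
  next
    case False
    define c where "c = inner r (v - p) / inner r r"
    have rr: "inner r r \<noteq> 0" using False by simp
    have "p + c *\<^sub>R r \<in> span (insert w B)"
      using p(1) spB rsp by (auto intro: span_add span_scale)
    moreover have "\<forall>b\<in>B. inner b (v - (p + c *\<^sub>R r)) = 0"
      using p(2) rB by (simp add: inner_diff_right inner_add_right)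
    moreover have "inner w (v - (p + c *\<^sub>R r)) = 0"
    proof -
      have "w = q + r" unfolding r_def by simp
      then have "inner w (v - (p + c *\<^sub>R r)) = inner q (v - p) - c * inner q r + inner r (v - p) - c * inner r r"
        by (simp add: inner_diff_right inner_add_right inner_add_left algebra_simps)
      also have "\<dots> = 0" using qp qr rr unfolding c_def by simp
      finally show ?thesis .
    qed
    ultimately show ?thesis by auto
  qed
qed

lemma span_coeffs:
  fixes f :: "'i \<Rightarrow> 'a::real_vector"
  assumes "finite I" and "x \<in> span (f ` I)"
  shows "\<exists>c. x = (\<Sum>i\<in>I. c i *\<^sub>R f i)"
  using assms(2)
proof (induction rule: span_induct_alt)
  case base then show ?case by (intro exI[of _ "\<lambda>_. 0"]) simp
next
  case (step c z y)
  obtain d where d: "y = (\<Sum>i\<in>I. d i *\<^sub>R f i)" using step by blast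
  obtain i0 where i0: "i0 \<in> I" "z = f i0" using step by blast
  have e1: "(\<Sum>i\<in>I. (d i + (if i = i0 then c else 0)) *\<^sub>R f i) = (\<Sum>i\<in>I. d i *\<^sub>R f i) + (\<Sum>i\<in>I. (if i = i0 then c else 0) *\<^sub>R f i)"
    unfolding scaleR_add_left sum.distrib ..
  have e2: "(\<Sum>i\<in>I. (if i = i0 then c else 0) *\<^sub>R f i) = (\<Sum>i\<in>I. if i = i0 then c *\<^sub>R f i else 0)"
    by (rule sum.cong) auto
  have e3: "(\<Sum>i\<in>I. if i = i0 then c *\<^sub>R f i else 0) = c *\<^sub>R z"
    using assms(1) i0 by (simp add: sum.delta')
  have "c *\<^sub>R z + y = (\<Sum>i\<in>I. (d i + (if i = i0 then c else 0)) *\<^sub>R f i)"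
    unfolding e1 e2 e3 d by simp
  then show ?case by metis
qed

lemma pyth_proj:
  fixes v p :: "'a::real_inner"
  assumes "inner p (v - p) = 0"
  shows "(norm v)\<^sup>2 = (norm p)\<^sup>2 + (norm (v - p))\<^sup>2"
proof -
  from assms have "inner p v = inner p p" by (simp add: inner_diff_right)
  then show ?thesis by (simp add: power2_norm_eq_inner inner_diff_left inner_diff_right inner_commute)
qed

theorem theorem2:
  fixes evU :: "'u::{real_inner,complete_space} \<Rightarrow> 'y \<Rightarrow> real"
    and Uk :: "'y \<Rightarrow> 'y \<Rightarrow> real"
    and evP :: "'p::{real_inner,complete_space} \<Rightarrow> ('y \<times> real list) \<Rightarrow> real"
    and Pk :: "('y \<times> real list) \<Rightarrow> ('y \<times> real list) \<Rightarrow> real"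
    and Pbar :: "('y \<times> real list) \<Rightarrow> real"
    and L :: "nat \<Rightarrow> ('y \<Rightarrow> real) \<Rightarrow> ('y \<Rightarrow> real)"
    and Q K M N :: nat
    and lam :: real
    and Y :: "nat \<Rightarrow> 'y"
    and Yobs :: "nat \<Rightarrow> nat \<Rightarrow> 'y"
    and uobs :: "nat \<Rightarrow> nat \<Rightarrow> real"
    and f :: "nat \<Rightarrow> 'y \<Rightarrow> real"
    and uh :: "nat \<Rightarrow> 'u"
    and Ph :: 'p
  assumes rkhsU: "rkhs evU Uk"
    and rkhsP: "rkhs evP Pk"
    and Q1: "Q \<ge> 1"
    and L1: "L 1 = id"
    and dual: "\<forall>q\<in>{1..Q}. \<forall>k\<in>{1..K}. bounded_linear (\<lambda>v. L q (evU v) (Y k))"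
    and lam_pos: "lam > 0"
    and obs_sub: "\<forall>m\<in>{1..M}. \<forall>n\<in>{1..N}. Yobs m n \<in> Y ` {1..K}"
    and feas: "\<forall>m\<in>{1..M}.
                 (\<forall>n\<in>{1..N}. evU (uh m) (Yobs m n) = uobs m n) \<and>
                 (\<forall>k\<in>{1..K}. evP Ph (PhiF L Q (evU (uh m)) (Y k))
                                + Pbar (PhiF L Q (evU (uh m)) (Y k)) = f m (Y k))"
    and minim: "\<forall>(v::nat \<Rightarrow> 'u) (G::'p).
                 (\<forall>m\<in>{1..M}.
                   (\<forall>n\<in>{1..N}. evU (v m) (Yobs m n) = uobs m n) \<and>
                   (\<forall>k\<in>{1..K}. evP G (PhiF L Q (evU (v m)) (Y k))
                                  + Pbar (PhiF L Q (evU (v m)) (Y k)) = f m (Y k)))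
                 \<longrightarrow> (norm Ph)\<^sup>2 + lam * (\<Sum>m\<in>{1..M}. (norm (uh m))\<^sup>2)
                     \<le> (norm G)\<^sup>2 + lam * (\<Sum>m\<in>{1..M}. (norm (v m))\<^sup>2)"
  shows "\<exists>(ah :: nat \<Rightarrow> nat \<Rightarrow> nat \<Rightarrow> real) (bh :: nat \<Rightarrow> nat \<Rightarrow> real).
    (\<forall>m\<in>{1..M}. evU (uh m) = Ucomb L Uk Y Q K (ah m)) \<and>
    evP Ph = (\<lambda>s. \<Sum>m\<in>{1..M}. \<Sum>k\<in>{1..K}. Pk (Spt L Uk Y Q K (ah m) k) s * bh m k) \<and>
    (let feasF = (\<lambda>(a :: nat \<Rightarrow> nat \<Rightarrow> nat \<Rightarrow> real) (b :: nat \<Rightarrow> nat \<Rightarrow> real).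
           \<forall>m\<in>{1..M}.
             (\<forall>n\<in>{1..N}. (\<Sum>q\<in>{1..Q}. \<Sum>k\<in>{1..K}. Uphi_y L Uk Y q k (Yobs m n) * a m q k) = uobs m n) \<and>
             (\<forall>k\<in>{1..K}. (\<Sum>m'\<in>{1..M}. \<Sum>k'\<in>{1..K}.
                  Pk (Spt L Uk Y Q K (a m') k') (Spt L Uk Y Q K (a m) k) * b m' k')
                = f m (Y k) - Pbar (Spt L Uk Y Q K (a m) k)));
         objF = (\<lambda>(a :: nat \<Rightarrow> nat \<Rightarrow> nat \<Rightarrow> real) (b :: nat \<Rightarrow> nat \<Rightarrow> real).
           (\<Sum>m'\<in>{1..M}. \<Sum>k'\<in>{1..K}. \<Sum>m''\<in>{1..M}. \<Sum>k''\<in>{1..K}.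
              b m' k' * Pk (Spt L Uk Y Q K (a m') k') (Spt L Uk Y Q K (a m'') k'') * b m'' k'')
           + lam * (\<Sum>m\<in>{1..M}. \<Sum>q\<in>{1..Q}. \<Sum>k\<in>{1..K}. \<Sum>l\<in>{1..Q}. \<Sum>j\<in>{1..K}.
              a m q k * Uphiphi L Uk Y q k l j * a m l j))
     in feasF ah bh \<and> (\<forall>a b. feasF a b \<longrightarrow> objF ah bh \<le> objF a b))"
proof -
  define A where "A = {1..Q}"
  define B where "B = {1..K}"
  define MM where "MM = {1..M}"
  have finA: "finite A" and finB: "finite B" and finMM: "finite MM" unfolding A_def B_def MM_def by auto
  have rU: "\<forall>y. \<exists>ky. evU ky = (\<lambda>x. Uk x y) \<and> (\<forall>v. inner ky v = evU v y)"
    using rkhsU unfolding rkhs_def by blast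
  then obtain Kx where Kx1: "\<And>y. evU (Kx y) = (\<lambda>x. Uk x y)" and Kx2: "\<And>y v. inner (Kx y) v = evU v y"
    by metis
  have rP: "\<forall>y. \<exists>ky. evP ky = (\<lambda>x. Pk x y) \<and> (\<forall>v. inner ky v = evP v y)"
    using rkhsP unfolding rkhs_def by blast
  then obtain KP where KP1: "\<And>y. evP (KP y) = (\<lambda>x. Pk x y)" and KP2: "\<And>y v. inner (KP y) v = evP v y"
    by metis
  have Pk_eq: "Pk x y = inner (KP x) (KP y)" for x y
    using KP2[of x "KP y"] KP1[of y] by simp
  have Pk_sym: "Pk x y = Pk y x" for x y
    unfolding Pk_eq by (simp add: inner_commute)
  define w where "w q k = (SOME r. \<forall>v. inner r v = L q (evU v) (Y k))" for q k
  have w: "inner (w q k) v = L q (evU v) (Y k)" if "q \<in> A" "k \<in> B" for q k v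
  proof -
    have "\<exists>r. \<forall>v. inner r v = L q (evU v) (Y k)"
      using riesz_rep dual that unfolding A_def B_def by blast
    then show ?thesis unfolding w_def by (rule someI_ex[where P="\<lambda>r. \<forall>v. inner r v = L q (evU v) (Y k)", THEN spec])
  qed
  have wev: "evU (w q k) = Uphi_y L Uk Y q k" if "q \<in> A" "k \<in> B" for q k
  proof
    fix y
    have "evU (w q k) y = inner (w q k) (Kx y)" using Kx2[of y "w q k"] by (simp add: inner_commute)
    also have "\<dots> = L q (\<lambda>x. Uk x y) (Y k)" using w[OF that] Kx1 by simp
    finally show "evU (w q k) y = Uphi_y L Uk Y q k y" unfolding Uphi_y_def .
  qed
  have Uphiphi_eq: "Uphiphi L Uk Y q k l j = inner (w q k) (w l j)"
    if "q \<in> A" "k \<in> B" "l \<in> A" "j \<in> B" for q k l j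
  proof -
    have "Uphiphi L Uk Y q k l j = L l (evU (w q k)) (Y j)"
      unfolding Uphiphi_def wev[OF that(1,2)] by (simp add: eta_contract_eq)
    also have "\<dots> = inner (w l j) (w q k)" using w[OF that(3,4)] by simp
    finally show ?thesis by (simp add: inner_commute)
  qed
  define V where "V a m = (\<Sum>q\<in>A. \<Sum>k\<in>B. a m q k *\<^sub>R w q k)" for a :: "nat \<Rightarrow> nat \<Rightarrow> nat \<Rightarrow> real" and m
  define GG where "GG a b = (\<Sum>m'\<in>MM. \<Sum>k'\<in>B. b m' k' *\<^sub>R KP (Spt L Uk Y Q K (a m') k'))"
    for a :: "nat \<Rightarrow> nat \<Rightarrow> nat \<Rightarrow> real" and b :: "nat \<Rightarrow> nat \<Rightarrow> real"
  have evV: "evU (V a m) = Ucomb L Uk Y Q K (a m)" for a m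
  proof
    fix y
    have "evU (V a m) y = inner (Kx y) (V a m)" by (simp add: Kx2)
    also have "\<dots> = (\<Sum>q\<in>A. \<Sum>k\<in>B. a m q k * evU (w q k) y)"
      unfolding V_def by (simp add: inner_sum_right Kx2)
    also have "\<dots> = (\<Sum>q\<in>A. \<Sum>k\<in>B. Uphi_y L Uk Y q k y * a m q k)"
      by (intro sum.cong refl) (simp add: wev)
    finally show "evU (V a m) y = Ucomb L Uk Y Q K (a m) y" unfolding Ucomb_def A_def B_def .
  qed
  have evGG: "evP (GG a b) s = (\<Sum>m'\<in>MM. \<Sum>k'\<in>B. Pk (Spt L Uk Y Q K (a m') k') s * b m' k')" for a b s
  proof -
    have "evP (GG a b) s = inner (KP s) (GG a b)" by (simp add: KP2)
    also have "\<dots> = (\<Sum>m'\<in>MM. \<Sum>k'\<in>B. b m' k' * evP (KP (Spt L Uk Y Q K (a m') k')) s)"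
      unfolding GG_def by (simp add: inner_sum_right KP2)
    also have "\<dots> = (\<Sum>m'\<in>MM. \<Sum>k'\<in>B. Pk (Spt L Uk Y Q K (a m') k') s * b m' k')"
      by (simp add: KP1 Pk_sym mult.commute)
    finally show ?thesis .
  qed
  have normV: "(norm (V a m))\<^sup>2 = (\<Sum>q\<in>A. \<Sum>k\<in>B. \<Sum>l\<in>A. \<Sum>j\<in>B.
              a m q k * Uphiphi L Uk Y q k l j * a m l j)" for a m
  proof -
    have "(norm (V a m))\<^sup>2 = (\<Sum>q\<in>A. \<Sum>k\<in>B. \<Sum>l\<in>A. \<Sum>j\<in>B.
              a m q k * inner (w l j) (w q k) * a m l j)"
      unfolding power2_norm_eq_inner V_def
      by (simp add: inner_sum_left inner_sum_right sum_distrib_left mult.commute mult.left_commute)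
    also have "\<dots> = (\<Sum>q\<in>A. \<Sum>k\<in>B. \<Sum>l\<in>A. \<Sum>j\<in>B.
              a m q k * Uphiphi L Uk Y q k l j * a m l j)"
      by (intro sum.cong refl) (simp add: Uphiphi_eq inner_commute)
    finally show ?thesis .
  qed
  have normGG: "(norm (GG a b))\<^sup>2 = (\<Sum>m'\<in>MM. \<Sum>k'\<in>B. \<Sum>m''\<in>MM. \<Sum>k''\<in>B.
              b m' k' * Pk (Spt L Uk Y Q K (a m') k') (Spt L Uk Y Q K (a m'') k'') * b m'' k'')" for a b
  proof -
    have "(norm (GG a b))\<^sup>2 = (\<Sum>m'\<in>MM. \<Sum>k'\<in>B. \<Sum>m''\<in>MM. \<Sum>k''\<in>B.
              b m' k' * inner (KP (Spt L Uk Y Q K (a m'') k'')) (KP (Spt L Uk Y Q K (a m') k')) * b m'' k'')"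
      unfolding power2_norm_eq_inner GG_def
      by (simp add: inner_sum_left inner_sum_right sum_distrib_left mult.commute mult.left_commute)
    then show ?thesis by (simp add: Pk_eq inner_commute)
  qed
  have Spt_eq: "Spt L Uk Y Q K (a m) k = PhiF L Q (evU (V a m)) (Y k)" for a m k
    unfolding Spt_def evV ..
  define feasF where "feasF = (\<lambda>(a :: nat \<Rightarrow> nat \<Rightarrow> nat \<Rightarrow> real) (b :: nat \<Rightarrow> nat \<Rightarrow> real).
           \<forall>m\<in>{1..M}.
             (\<forall>n\<in>{1..N}. (\<Sum>q\<in>{1..Q}. \<Sum>k\<in>{1..K}. Uphi_y L Uk Y q k (Yobs m n) * a m q k) = uobs m n) \<and>
             (\<forall>k\<in>{1..K}. (\<Sum>m'\<in>{1..M}. \<Sum>k'\<in>{1..K}.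
                  Pk (Spt L Uk Y Q K (a m') k') (Spt L Uk Y Q K (a m) k) * b m' k')
                = f m (Y k) - Pbar (Spt L Uk Y Q K (a m) k)))"
  define objF where "objF = (\<lambda>(a :: nat \<Rightarrow> nat \<Rightarrow> nat \<Rightarrow> real) (b :: nat \<Rightarrow> nat \<Rightarrow> real).
           (\<Sum>m'\<in>{1..M}. \<Sum>k'\<in>{1..K}. \<Sum>m''\<in>{1..M}. \<Sum>k''\<in>{1..K}.
              b m' k' * Pk (Spt L Uk Y Q K (a m') k') (Spt L Uk Y Q K (a m'') k'') * b m'' k'')
           + lam * (\<Sum>m\<in>{1..M}. \<Sum>q\<in>{1..Q}. \<Sum>k\<in>{1..K}. \<Sum>l\<in>{1..Q}. \<Sum>j\<in>{1..K}.
              a m q k * Uphiphi L Uk Y q k l j * a m l j))"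
  have objF_eq: "objF a b = (norm (GG a b))\<^sup>2 + lam * (\<Sum>m\<in>MM. (norm (V a m))\<^sup>2)" for a b
    unfolding objF_def normGG normV A_def B_def MM_def ..
  have feasF_iff: "feasF a b \<longleftrightarrow> (\<forall>m\<in>{1..M}.
                   (\<forall>n\<in>{1..N}. evU (V a m) (Yobs m n) = uobs m n) \<and>
                   (\<forall>k\<in>{1..K}. evP (GG a b) (PhiF L Q (evU (V a m)) (Y k))
                                  + Pbar (PhiF L Q (evU (V a m)) (Y k)) = f m (Y k)))" for a b
    unfolding feasF_def evGG Spt_eq[symmetric] by (simp add: evV Ucomb_def MM_def B_def algebra_simps)
  have lower: "(norm Ph)\<^sup>2 + lam * (\<Sum>m\<in>MM. (norm (uh m))\<^sup>2) \<le> objF a b" if "feasF a b" for a b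
    using minim[rule_format, of "V a" "GG a b"] that unfolding feasF_iff objF_eq MM_def by blast
  define I where "I = A \<times> B"
  define wf where "wf = (\<lambda>(q,k). w q k)"
  define WB where "WB = wf ` I"
  have finWB: "finite WB" unfolding WB_def I_def using finA finB by simp
  define p where "p m = (SOME p. p \<in> span WB \<and> (\<forall>b\<in>WB. inner b (uh m - p) = 0))" for m
  have p: "p m \<in> span WB \<and> (\<forall>b\<in>WB. inner b (uh m - p m) = 0)" for m
    unfolding p_def by (rule someI_ex) (use proj_exists[OF finWB] in blast)
  define JJ where "JJ = MM \<times> B"
  define sp where "sp = (\<lambda>(m,k). KP (PhiF L Q (evU (uh m)) (Y k)))"
  define PB where "PB = sp ` JJ"
  have finPB: "finite PB" unfolding PB_def JJ_def using finMM finB by simp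
  obtain g where g: "g \<in> span PB" "\<forall>b\<in>PB. inner b (Ph - g) = 0"
    using proj_exists[OF finPB] by blast
  have Lp: "L q (evU (p m)) (Y k) = L q (evU (uh m)) (Y k)" if "q \<in> A" "k \<in> B" for q k m
  proof -
    have "w q k \<in> WB" unfolding WB_def wf_def I_def using that by force
    then have "inner (w q k) (uh m - p m) = 0" using p by blast
    then have "inner (w q k) (p m) = inner (w q k) (uh m)" by (simp add: inner_diff_right)
    then show ?thesis using w[OF that] by simp
  qed
  have Phip: "PhiF L Q (evU (p m)) (Y k) = PhiF L Q (evU (uh m)) (Y k)" if "k \<in> B" for m k
  proof -
    have "map (\<lambda>q. L q (evU (p m)) (Y k)) [1..<Q+1] = map (\<lambda>q. L q (evU (uh m)) (Y k)) [1..<Q+1]"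
      by (rule map_cong[OF refl], rule Lp) (use that in \<open>auto simp: A_def\<close>)
    then show ?thesis unfolding PhiF_def by simp
  qed
  have evp: "evU (p m) (Yobs m n) = evU (uh m) (Yobs m n)" if "m \<in> MM" "n \<in> {1..N}" for m n
  proof -
    have "Yobs m n \<in> Y ` B" using obs_sub that unfolding MM_def B_def by blast
    then obtain k0 where k0: "k0 \<in> B" "Yobs m n = Y k0" by (rule imageE) simp
    have one: "1 \<in> A" using Q1 unfolding A_def by simp
    have "L 1 (evU (p m)) (Y k0) = L 1 (evU (uh m)) (Y k0)" by (rule Lp[OF one k0(1)])
    then show ?thesis using k0 L1 by simp
  qed
  have evg: "evP g (PhiF L Q (evU (uh m)) (Y k)) = evP Ph (PhiF L Q (evU (uh m)) (Y k))"
    if "m \<in> MM" "k \<in> B" for m k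
  proof -
    have "KP (PhiF L Q (evU (uh m)) (Y k)) \<in> PB" unfolding PB_def
      by (rule rev_image_eqI[of "(m,k)"]) (use that in \<open>simp_all add: JJ_def sp_def\<close>)
    then have "inner (KP (PhiF L Q (evU (uh m)) (Y k))) (Ph - g) = 0" using g by blast
    then show ?thesis by (simp add: inner_diff_right KP2)
  qed
  have "(norm Ph)\<^sup>2 + lam * (\<Sum>m\<in>MM. (norm (uh m))\<^sup>2) \<le> (norm g)\<^sup>2 + lam * (\<Sum>m\<in>MM. (norm (p m))\<^sup>2)"
  proof -
    have "\<forall>m\<in>{1..M}.
                   (\<forall>n\<in>{1..N}. evU (p m) (Yobs m n) = uobs m n) \<and>
                   (\<forall>k\<in>{1..K}. evP g (PhiF L Q (evU (p m)) (Y k))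
                                  + Pbar (PhiF L Q (evU (p m)) (Y k)) = f m (Y k))"
      using feas evp evg Phip unfolding MM_def B_def by simp
    then show ?thesis using minim[rule_format, of p g] unfolding MM_def by blast
  qed
  moreover have pu: "(norm (uh m))\<^sup>2 = (norm (p m))\<^sup>2 + (norm (uh m - p m))\<^sup>2" for m
  proof -
    have "inner (p m) (uh m - p m) = 0" using orth_span[of WB "uh m - p m" "p m"] p by blast
    then show ?thesis by (rule pyth_proj)
  qed
  moreover have "(norm Ph)\<^sup>2 = (norm g)\<^sup>2 + (norm (Ph - g))\<^sup>2"
  proof -
    have "inner g (Ph - g) = 0" using orth_span[of PB "Ph - g" g] g by blast
    then show ?thesis by (rule pyth_proj)
  qed
  moreover have "(\<Sum>m\<in>MM. (norm (uh m))\<^sup>2) = (\<Sum>m\<in>MM. (norm (p m))\<^sup>2) + (\<Sum>m\<in>MM. (norm (uh m - p m))\<^sup>2)"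
    unfolding pu by (rule sum.distrib)
  ultimately have ineq: "(norm (Ph - g))\<^sup>2 + lam * (\<Sum>m\<in>MM. (norm (uh m - p m))\<^sup>2) \<le> 0"
    by (simp add: distrib_left)
  have s0: "0 \<le> (\<Sum>m\<in>MM. (norm (uh m - p m))\<^sup>2)" by (simp add: sum_nonneg)
  then have ls0: "0 \<le> lam * (\<Sum>m\<in>MM. (norm (uh m - p m))\<^sup>2)" using lam_pos by simp
  have n0: "0 \<le> (norm (Ph - g))\<^sup>2" by simp
  have z1: "(norm (Ph - g))\<^sup>2 = 0" using ineq ls0 n0 by linarith
  have "lam * (\<Sum>m\<in>MM. (norm (uh m - p m))\<^sup>2) = 0" using ineq ls0 n0 by linarith
  then have z2: "(\<Sum>m\<in>MM. (norm (uh m - p m))\<^sup>2) = 0" using lam_pos by simp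
  have Phg: "Ph = g" using z1 by simp
  have uhp: "uh m = p m" if "m \<in> MM" for m
    using z2 finMM that by (simp add: sum_nonneg_eq_0_iff)
  have "\<forall>m. \<exists>c. m \<in> MM \<longrightarrow> uh m = (\<Sum>i\<in>I. c i *\<^sub>R wf i)"
  proof
    fix m
    show "\<exists>c. m \<in> MM \<longrightarrow> uh m = (\<Sum>i\<in>I. c i *\<^sub>R wf i)"
    proof (cases "m \<in> MM")
      case True
      then have "uh m \<in> span (wf ` I)" using uhp p WB_def by metis
      then show ?thesis using span_coeffs[of I] finA finB unfolding I_def by blast
    qed simp
  qed
  then obtain c where c: "\<And>m. m \<in> MM \<Longrightarrow> uh m = (\<Sum>i\<in>I. c m i *\<^sub>R wf i)" by metis
  define ah where "ah m q k = c m (q, k)" for m q k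
  have Vah: "V ah m = uh m" if "m \<in> MM" for m
    unfolding c[OF that] V_def ah_def I_def wf_def by (simp add: sum.cartesian_product case_prod_beta)
  obtain e where e: "Ph = (\<Sum>i\<in>JJ. e i *\<^sub>R sp i)"
    using span_coeffs[where I=JJ and f=sp and x=Ph] finMM finB g(1) Phg unfolding JJ_def PB_def by blast
  define bh where "bh m k = e (m, k)" for m k
  have GGah: "GG ah bh = Ph"
  proof -
    have "GG ah bh = (\<Sum>m'\<in>MM. \<Sum>k'\<in>B. bh m' k' *\<^sub>R KP (PhiF L Q (evU (uh m')) (Y k')))"
      unfolding GG_def by (intro sum.cong refl) (simp add: Spt_eq Vah)
    also have "\<dots> = Ph" unfolding e bh_def JJ_def sp_def by (simp add: sum.cartesian_product case_prod_beta)
    finally show ?thesis .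
  qed
  have main: "(\<forall>m\<in>{1..M}. evU (uh m) = Ucomb L Uk Y Q K (ah m)) \<and>
    evP Ph = (\<lambda>s. \<Sum>m\<in>{1..M}. \<Sum>k\<in>{1..K}. Pk (Spt L Uk Y Q K (ah m) k) s * bh m k) \<and>
    feasF ah bh \<and> (\<forall>a b. feasF a b \<longrightarrow> objF ah bh \<le> objF a b)"
  proof (intro conjI ballI allI impI)
    fix m assume "m \<in> {1..M}"
    then show "evU (uh m) = Ucomb L Uk Y Q K (ah m)" using Vah evV unfolding MM_def by metis
  next
    show "evP Ph = (\<lambda>s. \<Sum>m\<in>{1..M}. \<Sum>k\<in>{1..K}. Pk (Spt L Uk Y Q K (ah m) k) s * bh m k)"
      using evGG[of ah bh] GGah unfolding MM_def B_def by auto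
  next
    show "feasF ah bh" unfolding feasF_iff GGah using feas Vah unfolding MM_def by simp
  next
    fix a b assume "feasF a b"
    then have "(norm Ph)\<^sup>2 + lam * (\<Sum>m\<in>MM. (norm (uh m))\<^sup>2) \<le> objF a b" by (rule lower)
    moreover have "objF ah bh = (norm Ph)\<^sup>2 + lam * (\<Sum>m\<in>MM. (norm (uh m))\<^sup>2)"
      unfolding objF_eq GGah using Vah by simp
    ultimately show "objF ah bh \<le> objF a b" by simp
  qed
  then show ?thesis unfolding Let_def feasF_def objF_def by blast
qed

end
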